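(* Let $(\mathcal{S},d,\mathcal{C})$ be a complete uniformly convex hyperbolic space with a monotone modulus of uniform convexity $\eta$, let $\mathcal{A}\neq\emptyset$ be a closed convex subset of $\mathcal{S}$, and let $T:\mathcal{A}\to\mathcal{A}$ be a mean nonexpansive mapping with constants $a,b\ge0$, $a+b\le1$, $b<1$, such that $\mathcal{F}(T)\neq\emptyset$. Let $\{\alpha_n\}\subset[0,1]$, $\{r_n\}\subset[0,\infty)$, $x_0\in\mathcal{A}$, and let $\{x_n\}$ be generated by $$\omega_n=\mathcal{C}\Big(x_n,\,Tx_n,\,\tfrac{1}{r_n+1}\Big),\qquad x_{n+1}=\mathcal{C}\big(x_n,\,T\omega_n,\,\alpha_n\big),\qquad n\ge0.$$ Then $\{x_n\}$ converges (in the metric $d$) to a fixed point of $T$ if and only if $\liminf_{n\to\infty}d(x_n,\mathcal{F}(T))=0$, where $d(x,\mathcal{F}(T))=\inf\{d(x,z^* ):z^*\in\mathcal{F}(T)\}$.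
   Context: A hyperbolic space $(\mathcal{S},d,\mathcal{C})$ is a metric space $(\mathcal{S},d)$ with a map $\mathcal{C}:\mathcal{S}\times\mathcal{S}\times[0,1]\to\mathcal{S}$ such that for all $x,y,z,w,v\in\mathcal{S}$ and $\lambda,\mu\in[0,1]$: (i) $d(v,\mathcal{C}(x,y,\lambda))\le(1-\lambda)d(v,x)+\lambda d(v,y)$; (ii) $d(\mathcal{C}(x,y,\lambda),\mathcal{C}(x,y,\mu))=|\lambda-\mu|\,d(x,y)$; (iii) $\mathcal{C}(x,y,\lambda)=\mathcal{C}(y,x,1-\lambda)$; (iv) $d(\mathcal{C}(x,z,\lambda),\mathcal{C}(y,w,\lambda))\le(1-\lambda)d(x,y)+\lambda d(z,w)$. (In a normed space, $\mathcal{C}(x,y,\lambda)=(1-\lambda)x+\lambda y$.) A subset $\mathcal{A}$ is convex if $\mathcal{C}(x,y,\lambda)\in\mathcal{A}$ for all $x,y\in\mathcal{A}$, $\lambda\in[0,1]$. The space is uniformly convex if for every $r>0$ and $\epsilon\in(0,2]$ there is $\delta\in(0,1]$ such that for all $x,y,z\in\mathcal{S}$ with $d(x,z)\le r$, $d(y,z)\le r$, $d(x,y)\ge\epsilon r$ one has $d(\mathcal{C}(x,y,\tfrac12),z)\le(1-\delta)r$; a map $\eta:(0,\infty)\times(0,2]\to(0,1]$ giving such a $\delta=\eta(r,\epsilon)$ is a modulus of uniform convexity, and it is monotone if it is nonincreasing in $r$ for each fixed $\epsilon$. A mapping $T:\mathcal{A}\to\mathcal{A}$ is mean nonexpansive if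 there are constants $a,b\ge0$ with $a+b\le1$ such that $d(Tx,Ty)\le a\,d(x,y)+b\,d(x,Ty)$ for all $x,y\in\mathcal{A}$; $\mathcal{F}(T)$ denotes its set of fixed points. *)

theory Defs
  imports "HOL-Analysis.Analysis" "HOL-Library.Liminf_Limsup"
begin

text \<open>Hyperbolic space structure (Kohlenbach) on a metric space type, with the map C.\<close>
definition hyperbolic_space :: "('a::metric_space \<Rightarrow> 'a \<Rightarrow> real \<Rightarrow> 'a) \<Rightarrow> bool" where
  "hyperbolic_space C \<longleftrightarrow>
     (\<forall>x y z w v l m. l \<in> {0..1} \<and> m \<in> {0..1} \<longrightarrow>
        dist v (C x y l) \<le> (1 - l) * dist v x + l * dist v y \<and>
        dist (C x y l) (C x y m) = \<bar>l - m\<bar> * dist x y \<and>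
        C x y l = C y x (1 - l) \<and>
        dist (C x z l) (C y w l) \<le> (1 - l) * dist x y + l * dist z w)"

definition hyp_convex :: "('a \<Rightarrow> 'a \<Rightarrow> real \<Rightarrow> 'a) \<Rightarrow> 'a set \<Rightarrow> bool" where
  "hyp_convex C A \<longleftrightarrow> (\<forall>x\<in>A. \<forall>y\<in>A. \<forall>l\<in>{0..1}. C x y l \<in> A)"

definition modulus_uc :: "('a::metric_space \<Rightarrow> 'a \<Rightarrow> real \<Rightarrow> 'a) \<Rightarrow> (real \<Rightarrow> real \<Rightarrow> real) \<Rightarrow> bool" where
  "modulus_uc C \<eta> \<longleftrightarrow>
     (\<forall>r>0. \<forall>\<epsilon>\<in>{0<..2}. \<eta> r \<epsilon> \<in> {0<..1} \<and>
        (\<forall>x y z. dist x z \<le> r \<and> dist y z \<le> r \<and> dist x y \<ge> \<epsilon> * r \<longrightarrow>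
            dist (C x y (1/2)) z \<le> (1 - \<eta> r \<epsilon>) * r))"

definition monotone_modulus_uc :: "('a::metric_space \<Rightarrow> 'a \<Rightarrow> real \<Rightarrow> 'a) \<Rightarrow> (real \<Rightarrow> real \<Rightarrow> real) \<Rightarrow> bool" where
  "monotone_modulus_uc C \<eta> \<longleftrightarrow> modulus_uc C \<eta> \<and>
     (\<forall>\<epsilon>\<in>{0<..2}. \<forall>r s. 0 < r \<and> r \<le> s \<longrightarrow> \<eta> s \<epsilon> \<le> \<eta> r \<epsilon>)"

definition mean_nonexpansive_with :: "'a::metric_space set \<Rightarrow> ('a \<Rightarrow> 'a) \<Rightarrow> real \<Rightarrow> real \<Rightarrow> bool" where
  "mean_nonexpansive_with A T a b \<longleftrightarrow> T ` A \<subseteq> A \<and> a \<ge> 0 \<and> b \<ge> 0 \<and> a + b \<le> 1 \<and>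
     (\<forall>x\<in>A. \<forall>y\<in>A. dist (T x) (T y) \<le> a * dist x y + b * dist x (T y))"

definition fixed_points :: "'a set \<Rightarrow> ('a \<Rightarrow> 'a) \<Rightarrow> 'a set" where
  "fixed_points A T = {x\<in>A. T x = x}"

end

theory Submission
  imports Defs
begin

lemma infdist_lessE:
  assumes "F \<noteq> {}" "infdist y F < e"
  obtains p where "p \<in> F" "dist y p < e"
proof -
  have "(INF a\<in>F. dist y a) < e" using assms by (simp add: infdist_notempty)
  then obtain p where "p \<in> F" "dist y p < e"
    using cINF_less_iff[of F "\<lambda>a. dist y a" e] assms(1)
    by (auto intro: bdd_belowI2[where m=0])
  then show ?thesis using that by blast
qed

theorem theorem4:
  fixes C :: "'a::complete_space \<Rightarrow> 'a \<Rightarrow> real \<Rightarrow> 'a"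
    and \<eta> :: "real \<Rightarrow> real \<Rightarrow> real"
    and A :: "'a set" and T :: "'a \<Rightarrow> 'a" and a b :: real
    and \<alpha> r :: "nat \<Rightarrow> real" and x \<omega> :: "nat \<Rightarrow> 'a" and x0 :: 'a
  assumes hyp: "hyperbolic_space C"
    and uc: "monotone_modulus_uc C \<eta>"
    and A_ne: "A \<noteq> {}" and A_closed: "closed A" and A_conv: "hyp_convex C A"
    and T_mne: "mean_nonexpansive_with A T a b" and b_lt: "b < 1"
    and F_ne: "fixed_points A T \<noteq> {}"
    and alpha: "\<And>n. \<alpha> n \<in> {0..1}"
    and r_nonneg: "\<And>n. r n \<ge> 0"
    and x0A: "x0 \<in> A" and x_0: "x 0 = x0"
    and omega: "\<And>n. \<omega> n = C (x n) (T (x n)) (1 / (r n + 1))"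
    and x_Suc: "\<And>n. x (Suc n) = C (x n) (T (\<omega> n)) (\<alpha> n)"
  shows "(\<exists>p\<in>fixed_points A T. x \<longlonglongrightarrow> p) \<longleftrightarrow>
         liminf (\<lambda>n. ereal (infdist (x n) (fixed_points A T))) = 0"
proof -
  define F where "F = fixed_points A T"
  have TA: "T ` A \<subseteq> A" and a0: "a \<ge> 0" and b0: "b \<ge> 0" and ab: "a + b \<le> 1"
    and Tmne: "\<And>u v. u \<in> A \<Longrightarrow> v \<in> A \<Longrightarrow> dist (T u) (T v) \<le> a * dist u v + b * dist u (T v)"
    using T_mne unfolding mean_nonexpansive_with_def by auto
  have C1: "\<And>v u w l. l \<in> {0..1} \<Longrightarrow> dist v (C u w l) \<le> (1 - l) * dist v u + l * dist v w"
    using hyp unfolding hyperbolic_space_def by blast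
  have Cconv: "\<And>u w l. u \<in> A \<Longrightarrow> w \<in> A \<Longrightarrow> l \<in> {0..1} \<Longrightarrow> C u w l \<in> A"
    using A_conv unfolding hyp_convex_def by blast
  have lam: "\<And>n. 1 / (r n + 1) \<in> {0..1}"
  proof -
    fix n have "r n \<ge> 0" by (rule r_nonneg)
    then show "1 / (r n + 1) \<in> {0..1}" by (simp add: divide_le_eq)
  qed
  have xA: "x n \<in> A \<and> \<omega> n \<in> A" for n
  proof (induction n)
    case 0
    then show ?case using x_0 x0A omega[of 0] Cconv lam TA by auto
  next
    case (Suc n)
    have "x (Suc n) \<in> A" using Suc x_Suc[of n] Cconv alpha TA by auto
    then show ?case using omega[of "Suc n"] Cconv lam TA by auto
  qed
  have FA: "F \<subseteq> A" unfolding F_def fixed_points_def by auto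
  have quasi: "dist p (T y) \<le> dist p y" if p: "p \<in> F" and y: "y \<in> A" for p y
  proof -
    have "T p = p" "p \<in> A" using p unfolding F_def fixed_points_def by auto
    then have "dist (T y) (T p) \<le> a * dist y p + b * dist y (T p)" using Tmne[OF y \<open>p \<in> A\<close>] by simp
    also have "\<dots> = (a + b) * dist y p" using \<open>T p = p\<close> by (simp add: algebra_simps)
    also have "\<dots> \<le> dist y p" using ab mult_right_mono[OF ab zero_le_dist[of y p]] by simp
    finally show ?thesis using \<open>T p = p\<close> by (simp add: dist_commute)
  qed
  have conv_le: "dist p (C u w l) \<le> dist p u" if "l \<in> {0..1}" "dist p w \<le> dist p u" for p u w l
  proof -
    have "dist p (C u w l) \<le> (1 - l) * dist p u + l * dist p w" by (rule C1[OF that(1)])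
    also have "\<dots> \<le> (1 - l) * dist p u + l * dist p u"
      using that by (intro add_left_mono mult_left_mono) auto
    finally show ?thesis by (simp add: algebra_simps)
  qed
  have fejer: "dist p (x (Suc n)) \<le> dist p (x n)" if p: "p \<in> F" for p n
  proof -
    have "dist p (\<omega> n) \<le> dist p (x n)"
      unfolding omega[of n] by (rule conv_le[OF lam quasi[OF p conjunct1[OF xA]]])
    then have "dist p (T (\<omega> n)) \<le> dist p (x n)"
      using quasi[OF p conjunct2[OF xA[of n]]] by linarith
    then show ?thesis unfolding x_Suc[of n] by (rule conv_le[OF alpha])
  qed
  have fejer2: "dist (x m) p \<le> dist (x n) p" if "p \<in> F" "n \<le> m" for p n m
  proof -
    have "dist p (x m) \<le> dist p (x n)"
      using that(2) by (induction m rule: dec_induct) (auto intro: order_trans[OF fejer[OF that(1)]])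
    then show ?thesis by (simp add: dist_commute)
  qed
  have Fne: "F \<noteq> {}" using F_ne F_def by simp
  define D where "D n = infdist (x n) F" for n
  have Dnn: "D n \<ge> 0" for n unfolding D_def by (rule infdist_nonneg)
  have Ddec: "D (Suc n) \<le> D n" for n
  proof -
    have "D (Suc n) \<le> dist (x n) p" if "p \<in> F" for p
      unfolding D_def using infdist_le[OF that, of "x (Suc n)"] fejer2[OF that, of n "Suc n"] by simp
    then show ?thesis unfolding D_def infdist_notempty[OF Fne] by (intro cINF_greatest Fne) auto
  qed
  have Fclosed: "closed F"
  proof (rule closed_sequential_limits[THEN iffD2], intro allI impI, elim conjE)
    fix s q assume sF: "\<forall>n. s n \<in> F" and sq: "s \<longlonglongrightarrow> q"
    have qA: "q \<in> A"
      using sF FA by (intro closed_sequentially[OF A_closed _ sq]) blast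
    have sT: "\<And>n. T (s n) = s n" "\<And>n. s n \<in> A" using sF unfolding F_def fixed_points_def by simp_all
    have bnd: "dist (s n) (T q) \<le> a / (1 - b) * dist (s n) q" for n
    proof -
      have "dist (s n) (T q) \<le> a * dist (s n) q + b * dist (s n) (T q)"
        using Tmne[OF sT(2)[of n] qA] sT(1)[of n] by simp
      then have "(1 - b) * dist (s n) (T q) \<le> a * dist (s n) q" by (simp add: algebra_simps)
      then have "dist (s n) (T q) \<le> a * dist (s n) q / (1 - b)"
        using b_lt by (subst pos_le_divide_eq) (simp_all add: mult.commute)
      then show ?thesis by simp
    qed
    have d0: "(\<lambda>n. dist (s n) q) \<longlonglongrightarrow> 0" using sq by (rule tendsto_dist_iff[THEN iffD1])
    have m0: "(\<lambda>n. a / (1 - b) * dist (s n) q) \<longlonglongrightarrow> 0"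
      by (rule tendsto_mult_right_zero[OF d0])
    have e1: "\<forall>\<^sub>F n in sequentially. 0 \<le> dist (s n) (T q)" by simp
    have e2: "\<forall>\<^sub>F n in sequentially. dist (s n) (T q) \<le> a / (1 - b) * dist (s n) q"
      by (rule always_eventually) (intro allI bnd)
    have "(\<lambda>n. dist (s n) (T q)) \<longlonglongrightarrow> 0"
      by (rule tendsto_sandwich[OF e1 e2 tendsto_const m0])
    then have "s \<longlonglongrightarrow> T q" by (rule tendsto_dist_iff[THEN iffD2])
    then have "T q = q" using sq by (rule LIMSEQ_unique)
    then show "q \<in> F" unfolding F_def fixed_points_def using qA by auto
  qed
  show ?thesis unfolding F_def[symmetric] D_def[symmetric]
  proof
    assume "\<exists>p\<in>F. x \<longlonglongrightarrow> p"
    then obtain p where p: "p \<in> F" "x \<longlonglongrightarrow> p" by blast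
    have dx0: "(\<lambda>n. dist (x n) p) \<longlonglongrightarrow> 0" using p(2) by (rule tendsto_dist_iff[THEN iffD1])
    have g1: "\<forall>\<^sub>F n in sequentially. 0 \<le> D n"
      by (rule always_eventually) (intro allI Dnn)
    have g2: "\<forall>\<^sub>F n in sequentially. D n \<le> dist (x n) p"
      by (rule always_eventually) (intro allI, unfold D_def, rule infdist_le[OF p(1)])
    have "D \<longlonglongrightarrow> 0"
      by (rule tendsto_sandwich[OF g1 g2 tendsto_const dx0])
    then have "(\<lambda>n. ereal (D n)) \<longlonglongrightarrow> ereal 0" by (rule tendsto_ereal)
    then have "liminf (\<lambda>n. ereal (D n)) = ereal 0"
      by (intro lim_imp_Liminf) simp_all
    then show "liminf (\<lambda>n. ereal (D n)) = 0" by (simp add: zero_ereal_def)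
  next
    assume li: "liminf (\<lambda>n. ereal (D n)) = 0"
    have "decseq D" using Ddec by (simp add: decseq_Suc_iff)
    then obtain L where L: "D \<longlonglongrightarrow> L"
      using decseq_convergent[of D 0] Dnn by blast
    then have "(\<lambda>n. ereal (D n)) \<longlonglongrightarrow> ereal L" by (rule tendsto_ereal)
    then have "liminf (\<lambda>n. ereal (D n)) = ereal L"
      by (intro lim_imp_Liminf) simp_all
    then have "L = 0" using li by (simp add: zero_ereal_def)
    with L have D0: "D \<longlonglongrightarrow> 0" by simp
    have "Cauchy x"
    proof (rule metric_CauchyI)
      fix e :: real assume e: "e > 0"
      have e2: "e / 2 > 0" using e by simp
      from metric_LIMSEQ_D[OF D0 e2] obtain N where N: "\<forall>n\<ge>N. dist (D n) 0 < e / 2"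
        by blast
      then have "dist (D N) 0 < e / 2" by simp
      then have "infdist (x N) F < e / 2" using Dnn[of N] by (simp add: D_def)
      then obtain p where p: "p \<in> F" "dist (x N) p < e / 2" using infdist_lessE[OF Fne] by blast
      show "\<exists>M. \<forall>m\<ge>M. \<forall>n\<ge>M. dist (x m) (x n) < e"
      proof (intro exI allI impI)
        fix m n assume "N \<le> m" "N \<le> n"
        then have "dist (x m) p < e / 2" "dist (x n) p < e / 2"
          using fejer2[OF p(1), of N m] fejer2[OF p(1), of N n] p(2) by linarith+
        then show "dist (x m) (x n) < e"
          using dist_triangle2[of "x m" "x n" p] by linarith
      qed
    qed
    then obtain q where q: "x \<longlonglongrightarrow> q" using Cauchy_convergent unfolding convergent_def by blast
    have "(\<lambda>n. infdist (x n) F) \<longlonglongrightarrow> infdist q F" using q by (rule tendsto_infdist)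
    then have "infdist q F = 0" using D0 unfolding D_def by (rule LIMSEQ_unique)
    then have "q \<in> F" using in_closure_iff_infdist_zero[OF Fne] Fclosed by simp
    then show "\<exists>p\<in>F. x \<longlonglongrightarrow> p" using q by blast
  qed
qed

end
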